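(* Let $q$ be a prime power with $q\not\equiv -1\pmod 3$, let $G=\mathrm{SU}_3(q)$, and let $\mathcal{C}$ be the $G$-conjugacy class $C_3^{(0,0)}$. Then $K_{\mathcal{C}}$ is irreducible.
   Context: $\mathrm{SU}_3(q)$ is the group of determinant-one matrices $M\in\mathrm{GL}_3(q^2)$ with $M^*JM=J$, where $J$ has ones on the anti-diagonal and zeros elsewhere and $M^*$ is the transpose of $M$ with every entry raised to the $q$-th power. $C_3^{(0,0)}$ is the $\mathrm{SU}_3(q)$-conjugacy class of $\begin{pmatrix}1&1&\alpha\\0&1&-1\\0&0&1\end{pmatrix}$ where $\alpha\in\mathbb{F}_{q^2}^\times$ satisfies $\alpha+\alpha^q+1=0$. For a finite group $G$ and a subset $\mathcal{C}\subseteq G\setminus\{1\}$ closed under conjugation, the Killing form is $K_{\mathcal{C}}(a,b)=|C_G(ab)\cap\mathcal{C}|$ on the basis $\mathcal{C}$; it is irreducible if the graph with vertex set $\mathcal{C}$, in which distinct $a,b$ are adjacent iff $C_G(ab)\cap\mathcal{C}\neq\emptyset$, is connected. *)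

theory Defs
  imports "HOL-Analysis.Analysis" "HOL-Library.Numeral_Type" "HOL-Computational_Algebra.Primes"
begin

text \<open>Matrices over a finite field 'a, which plays the role of F_(q^2).
  Entries are indexed by the type 3 via the vector notation (rows/columns 1,2,3).\<close>

definition prime_power :: "nat \<Rightarrow> bool" where
  "prime_power q \<longleftrightarrow> (\<exists>p k. prime p \<and> k > 0 \<and> q = p ^ k)"

definition antidiag_J :: "'a::field ^ 3 ^ 3" where
  "antidiag_J = vector [vector [0, 0, 1], vector [0, 1, 0], vector [1, 0, 0]]"

definition star_q :: "nat \<Rightarrow> 'a::field ^ 3 ^ 3 \<Rightarrow> 'a ^ 3 ^ 3" where
  "star_q q M = transpose (\<chi> i j. (M $ i $ j) ^ q)"

definition SU3 :: "nat \<Rightarrow> ('a::field ^ 3 ^ 3) set" where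
  "SU3 q = {M. det M = 1 \<and> star_q q M ** antidiag_J ** M = antidiag_J}"

definition u_elt :: "'a::field \<Rightarrow> 'a ^ 3 ^ 3" where
  "u_elt \<alpha> = vector [vector [1, 1, \<alpha>], vector [0, 1, -1], vector [0, 0, 1]]"

definition conj_class :: "nat \<Rightarrow> 'a::field ^ 3 ^ 3 \<Rightarrow> ('a ^ 3 ^ 3) set" where
  "conj_class q x = {g ** x ** matrix_inv g | g. g \<in> SU3 q}"

text \<open>Killing form irreducibility: the graph on C, where distinct a, b are adjacent
  iff the centraliser of ab meets C, is connected.\<close>
definition killing_adj :: "('a::field ^ 3 ^ 3) set \<Rightarrow> 'a ^ 3 ^ 3 \<Rightarrow> 'a ^ 3 ^ 3 \<Rightarrow> bool" where
  "killing_adj C a b \<longleftrightarrow> a \<in> C \<and> b \<in> C \<and> a \<noteq> b \<and>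
     (\<exists>c\<in>C. c ** (a ** b) = (a ** b) ** c)"

definition killing_irreducible :: "('a::field ^ 3 ^ 3) set \<Rightarrow> bool" where
  "killing_irreducible C \<longleftrightarrow>
     (\<forall>a\<in>C. \<forall>b\<in>C. (a, b) \<in> {(x, y). killing_adj C x y}\<^sup>*)"

end

theory Submission
  imports Defs
begin

lemma fin_power_card_same:
  fixes x :: "'a :: {field,finite}"
  shows "x ^ CARD('a) = x"
proof (cases "x = 0")
  case False
  have "x * (\<Prod>y\<in>UNIV-{0}. x * y) = x * x ^ (card (UNIV :: 'a set) - 1) * \<Prod>(UNIV-{0})"
    by (simp add: prod.distrib mult_ac)
  also have "x * x ^ (card (UNIV :: 'a set) - 1) = x ^ Suc (card (UNIV :: 'a set) - 1)"
    by (subst power_Suc) auto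
  also have "Suc (card (UNIV :: 'a set) - 1) = card (UNIV :: 'a set)"
    using finite_UNIV_card_ge_0[where ?'a = 'a] by simp
  also have "(\<Prod>y\<in>UNIV-{0}. x * y) = (\<Prod>y\<in>UNIV-{0}. y)"
    by (rule prod.reindex_bij_witness[of _ "\<lambda>y. y / x" "\<lambda>y. x * y"]) (use False in auto)
  finally show ?thesis
    by simp
qed (use finite_UNIV_card_ge_0[where ?'a = 'a] in auto)

lemma of_nat_card_zero: "of_nat CARD('a) = (0 :: 'a :: {field,finite})"
proof -
  have "(\<Sum>y\<in>(UNIV::'a set). y + 1) = (\<Sum>y\<in>(UNIV::'a set). y)"
    by (rule sum.reindex_bij_witness[of _ "\<lambda>y. y - 1" "\<lambda>y. y + 1"]) auto
  then show ?thesis by (simp add: sum.distrib)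
qed

lemma char_is_p:
  assumes "prime p" "CARD('a :: {field,finite}) = p ^ m" "m > 0"
  shows "CHAR('a) = p"
proof -
  have pc: "prime CHAR('a)"
    using prime_CHAR_semidom[where ?'a = 'a] finite_imp_CHAR_pos[where ?'a = 'a] by auto
  have "CHAR('a) dvd CARD('a)"
    using of_nat_card_zero[where ?'a='a] of_nat_eq_0_iff_char_dvd by blast
  then have "CHAR('a) dvd p" using assms pc prime_dvd_power by metis
  then show ?thesis using pc assms(1) by (simp add: primes_dvd_imp_eq)
qed

lemma frob_add:
  fixes x y :: "'a :: {field,finite}"
  assumes "prime_power q" "CARD('a) = q ^ 2"
  shows "(x + y) ^ q = x ^ q + y ^ q"
proof -
  obtain p k where pk: "prime p" "k > 0" "q = p ^ k" using assms(1) unfolding prime_power_def by blast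
  have "CARD('a) = p ^ (2*k)" using assms(2) pk by (simp add: power_mult mult.commute)
  then have "CHAR('a) = p" using char_is_p pk by (metis gr0I mult_is_0 zero_neq_numeral)
  then show ?thesis using freshmans_dream'[of q k x y] pk by simp
qed

lemma cube_root_one:
  fixes k :: "'a::field"
  assumes "k ^ 3 = 1" "k ^ q = k ^ 2" "q mod 3 \<noteq> 2"
  shows "k = 1"
proof -
  have k0: "k \<noteq> 0" using assms(1) by auto
  obtain m r where q: "q = 3 * m + r" and r: "r = q mod 3" by (metis div_mod_decomp mult.commute)
  have "k ^ q = (k ^ 3) ^ m * k ^ r" unfolding q by (simp only: power_add power_mult)
  then have "k ^ q = k ^ r" using assms(1) by simp
  then have e: "k ^ r = k ^ 2" using assms(2) by simp
  have "r = 0 \<or> r = 1" using assms(3) r by linarith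
  then show ?thesis
  proof
    assume "r = 0"
    then have "k ^ 2 = 1" using e by simp
    then have "k * k^2 = k" by simp
    moreover have "k * k^2 = k^3" by (simp add: power2_eq_square power3_eq_cube)
    ultimately show ?thesis using assms(1) by simp
  next
    assume "r = 1"
    then have "k = k * k" using e by (simp add: power2_eq_square)
    then show ?thesis using k0 by (metis mult_cancel_left2)
  qed
qed

lemma torus_surj:
  fixes b :: "'a :: {field,finite}"
  assumes "CARD('a) = q ^ 2" "q mod 3 \<noteq> 2" "b \<noteq> 0"
  shows "\<exists>a. a \<noteq> 0 \<and> a * a = b * a ^ q"
proof -
  let ?S = "UNIV - {0::'a}"
  let ?f = "\<lambda>a::'a. a * a / a ^ q"
  have inj: "inj_on ?f ?S"
  proof (rule inj_onI)
    fix a c assume a: "a \<in> ?S" and c: "c \<in> ?S" and e: "?f a = ?f c"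
    define k where "k = a / c"
    have a0: "a \<noteq> 0" and c0: "c \<noteq> 0" using a c by auto
    have ak: "a = k * c" using c0 by (simp add: k_def)
    have k0: "k \<noteq> 0" using a0 ak by auto
    have "?f a = (k * c) * (k * c) / (k ^ q * c ^ q)"
      using ak by (simp add: power_mult_distrib)
    also have "\<dots> = (k * k / k ^ q) * (c * c / c ^ q)"
      by (simp add: times_divide_times_eq mult_ac)
    finally have "?f a = (k * k / k ^ q) * (c * c / c ^ q)" .
    then have "(k * k / k ^ q) * (c * c / c ^ q) = 1 * (c * c / c ^ q)"
      using e by (simp only: mult_1)
    moreover have Y0: "c * c / c ^ q \<noteq> 0" using c0 by simp
    ultimately have "k * k / k ^ q = 1" using mult_right_cancel[OF Y0] by blast
    then have kq: "k ^ q = k ^ 2" using k0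
      by (simp add: power2_eq_square divide_eq_1_iff)
    have "k ^ (q * q) = k" using fin_power_card_same[of k] assms(1) by (simp add: power2_eq_square)
    moreover have "k ^ (q * q) = k ^ 4"
    proof -
      have "k ^ (q * q) = (k ^ q) ^ q" by (simp only: power_mult)
      also have "\<dots> = (k ^ 2) ^ q" using kq by simp
      also have "\<dots> = (k ^ q) ^ 2" by (metis power_mult mult.commute)
      also have "\<dots> = (k ^ 2) ^ 2" using kq by simp
      also have "\<dots> = k ^ 4" by simp
      finally show ?thesis .
    qed
    ultimately have "k ^ 4 = k" by simp
    moreover have "k ^ 4 = k * k ^ 3" using power_add[of k 1 3] by simp
    ultimately have "k * k ^ 3 = k * 1" by simp
    then have "k ^ 3 = 1" using k0 by simp
    then have "k = 1" using cube_root_one kq assms(2) by blast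
    then show "a = c" using ak by simp
  qed
  have "?f ` ?S \<subseteq> ?S" by auto
  then have "?f ` ?S = ?S" using inj by (simp add: endo_inj_surj)
  moreover have "b \<in> ?S" using assms(3) by simp
  ultimately have "b \<in> ?f ` ?S" by simp
  then obtain a where "a \<in> ?S" "b = ?f a" by blast
  then show ?thesis by (auto simp: field_simps)
qed

definition mk :: "'a::zero \<Rightarrow> 'a \<Rightarrow> 'a \<Rightarrow> 'a \<Rightarrow> 'a \<Rightarrow> 'a \<Rightarrow> 'a \<Rightarrow> 'a \<Rightarrow> 'a \<Rightarrow> 'a^3^3" where
  "mk a b c d e f g h i = vector [vector [a,b,c], vector [d,e,f], vector [g,h,i]]"

lemma mk_nth [simp]:
  "mk a b c d e f g h i $ 1 $ 1 = a" "mk a b c d e f g h i $ 1 $ 2 = b" "mk a b c d e f g h i $ 1 $ 3 = c"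
  "mk a b c d e f g h i $ 2 $ 1 = d" "mk a b c d e f g h i $ 2 $ 2 = e" "mk a b c d e f g h i $ 2 $ 3 = f"
  "mk a b c d e f g h i $ 3 $ 1 = g" "mk a b c d e f g h i $ 3 $ 2 = h" "mk a b c d e f g h i $ 3 $ 3 = i"
  by (simp_all add: mk_def)

lemma mat_eq_mk: "(M::'a::zero^3^3) = mk (M$1$1) (M$1$2) (M$1$3) (M$2$1) (M$2$2) (M$2$3) (M$3$1) (M$3$2) (M$3$3)"
  by (simp add: vec_eq_iff forall_3)

lemma mk_eq_iff [simp]:
  "mk a b c d e f g h i = mk a' b' c' d' e' f' g' h' i' \<longleftrightarrow>
    a = a' \<and> b = b' \<and> c = c' \<and> d = d' \<and> e = e' \<and> f = f' \<and> g = g' \<and> h = h' \<and> i = i'"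
  by (auto simp add: vec_eq_iff forall_3)

lemma mk_mult [simp]:
  "mk a b c d e f g h i ** mk a' b' c' d' e' f' g' h' i' =
   mk (a*a' + b*d' + c*g') (a*b' + b*e' + c*h') (a*c' + b*f' + c*i')
      (d*a' + e*d' + f*g') (d*b' + e*e' + f*h') (d*c' + e*f' + f*i')
      (g*a' + h*d' + i*g') (g*b' + h*e' + i*h') (g*c' + h*f' + i*i')"
  by (simp add: vec_eq_iff forall_3 matrix_matrix_mult_def sum_3)

lemma det_mk: "det (mk a b c d e f g h i :: 'a::comm_ring_1^3^3) =
   a*e*i + b*f*g + c*d*h - a*f*h - b*d*i - c*e*g"
  by (simp add: det_3)

lemma star_mk: "star_q q (mk a b c d e f g h i :: 'a::field^3^3) =
   mk (a^q) (d^q) (g^q) (b^q) (e^q) (h^q) (c^q) (f^q) (i^q)"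
  by (simp add: star_q_def vec_eq_iff forall_3 transpose_def)

lemma J_mk: "antidiag_J = mk 0 0 1 0 1 0 1 0 0"
  by (simp add: antidiag_J_def mk_def)

lemma u_elt_mk: "u_elt \<alpha> = mk 1 1 \<alpha> 0 1 (-1) 0 0 1"
  by (simp add: u_elt_def mk_def)

lemma mat1_mk: "(mat 1 :: 'a::{zero,one}^3^3) = mk 1 0 0 0 1 0 0 0 1"
  by (simp add: vec_eq_iff forall_3 mat_def)

lemma det_nz_inv:
  fixes A :: "'a::field^3^3"
  assumes "det A \<noteq> 0"
  shows "A ** matrix_inv A = mat 1" "matrix_inv A ** A = mat 1"
proof -
  have "invertible A" using assms invertible_det_nz by blast
  then have "\<exists>A'. A ** A' = mat 1 \<and> A' ** A = mat 1" unfolding invertible_def by blast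
  then have "A ** matrix_inv A = mat 1 \<and> matrix_inv A ** A = mat 1"
    unfolding matrix_inv_def by (rule someI_ex)
  then show "A ** matrix_inv A = mat 1" "matrix_inv A ** A = mat 1" by auto
qed

lemma inv_unique:
  fixes A :: "'a::field^3^3"
  assumes "det A \<noteq> 0" "A ** B = mat 1"
  shows "matrix_inv A = B"
proof -
  have "matrix_inv A = (matrix_inv A ** A) ** B" using assms(2) by (simp add: matrix_mul_assoc[symmetric])
  then show ?thesis using det_nz_inv[OF assms(1)] by simp
qed

locale su3 =
  fixes q :: nat and \<alpha> :: "'a::{field,finite}"
  assumes fadd: "\<And>x y::'a. (x + y) ^ q = x ^ q + y ^ q"
    and finv: "\<And>x::'a. (x ^ q) ^ q = x"
    and qpos: "q > 0"
    and a0: "\<alpha> \<noteq> 0"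
    and arel: "\<alpha> ^ q = - 1 - \<alpha>"
    and tsurj: "\<And>b::'a. b \<noteq> 0 \<Longrightarrow> \<exists>a. a \<noteq> 0 \<and> a * a = b * a ^ q"
begin

lemma fzero [simp]: "(0::'a) ^ q = 0" using qpos by simp
lemma fneg [simp]: "(- x :: 'a) ^ q = - (x ^ q)"
proof -
  have "(x + - x) ^ q = x ^ q + (- x) ^ q" by (rule fadd)
  then show ?thesis by (simp add: eq_neg_iff_add_eq_0 add.commute)
qed
lemma fsub: "(x - y :: 'a) ^ q = x ^ q - y ^ q"
  using fadd[of x "-y"] by simp

lemma star_mult: "star_q q (A ** B) = star_q q B ** star_q q (A :: 'a^3^3)"
  by (simp add: vec_eq_iff forall_3 star_q_def transpose_def matrix_matrix_mult_def sum_3 fadd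
      power_mult_distrib mult.commute)

lemma star_one: "star_q q (mat 1 :: 'a^3^3) = mat 1"
  by (simp add: mat1_mk star_mk)

lemma J_sq: "antidiag_J ** antidiag_J = (mat 1 :: 'a^3^3)"
  by (simp add: J_mk mat1_mk)

lemma SU3_det: "M \<in> SU3 q \<Longrightarrow> det M = (1::'a)" by (simp add: SU3_def)

lemma SU3_mult: assumes "A \<in> SU3 q" "B \<in> SU3 q" shows "A ** B \<in> (SU3 q :: ('a^3^3) set)"
proof -
  have "star_q q (A ** B) ** antidiag_J ** (A ** B) = star_q q B ** (star_q q A ** antidiag_J ** A) ** B"
    by (simp add: star_mult matrix_mul_assoc)
  also have "\<dots> = antidiag_J" using assms by (simp add: SU3_def)
  finally show ?thesis using assms by (simp add: SU3_def det_mul)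
qed

lemma SU3_inv:
  assumes "A \<in> SU3 q"
  shows "A ** matrix_inv A = mat 1" "matrix_inv A ** A = mat 1" "matrix_inv A \<in> (SU3 q :: ('a^3^3) set)"
proof -
  have d: "det A \<noteq> 0" using assms by (simp add: SU3_def)
  show i1: "A ** matrix_inv A = mat 1" and i2: "matrix_inv A ** A = mat 1" using det_nz_inv[OF d] by auto
  let ?h = "matrix_inv A"
  have "det A * det ?h = 1" using i1 by (metis det_mul det_I)
  then have dh: "det ?h = 1" using assms by (simp add: SU3_def)
  have "star_q q ?h ** antidiag_J ** ?h = star_q q ?h ** (star_q q A ** antidiag_J ** A) ** ?h"
    using assms by (simp add: SU3_def)
  also have "\<dots> = star_q q (A ** ?h) ** antidiag_J ** (A ** ?h)"
    by (simp add: star_mult matrix_mul_assoc)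
  also have "\<dots> = antidiag_J" using i1 by (simp add: star_one)
  finally show "matrix_inv A \<in> SU3 q" using dh by (simp add: SU3_def)
qed

end

context su3 begin

definition upos :: "'a \<Rightarrow> 'a \<Rightarrow> 'a^3^3" where
  "upos b c = mk 1 b c 0 1 (- (b ^ q)) 0 0 1"

lemma SU3_upos: "upos b c \<in> SU3 q \<longleftrightarrow> c + c ^ q + b * b ^ q = 0"
  by (simp add: upos_def SU3_def star_mk J_mk det_mk finv algebra_simps)

abbreviation "X \<equiv> u_elt \<alpha>"
abbreviation "C \<equiv> (conj_class q X :: ('a^3^3) set)"
abbreviation "R \<equiv> {(a, b). killing_adj C a b}"
definition kappa :: "'a^3^3 \<Rightarrow> 'a^3^3 \<Rightarrow> 'a^3^3" where
  "kappa g y = g ** y ** matrix_inv g"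

lemma X_upos: "X = upos 1 \<alpha>"
  by (simp add: u_elt_mk upos_def)

lemma X_SU3: "X \<in> SU3 q"
  unfolding X_upos SU3_upos using arel by simp

lemma kappa_mult: "g \<in> SU3 q \<Longrightarrow> kappa g (A ** B) = kappa g A ** kappa g B"
  unfolding kappa_def using SU3_inv(2)[of g]
  by (metis matrix_mul_assoc matrix_mul_rid)

lemma kappa_intertwine: "g \<in> SU3 q \<Longrightarrow> kappa g y ** g = g ** y"
  unfolding kappa_def using SU3_inv(2)[of g]
  by (metis matrix_mul_assoc matrix_mul_rid)

lemma intertwine_kappa: "g \<in> SU3 q \<Longrightarrow> z ** g = g ** y \<Longrightarrow> z = kappa g y"
  unfolding kappa_def using SU3_inv(1)[of g]
  by (metis matrix_mul_assoc matrix_mul_rid)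

lemma kappa_inj: "g \<in> SU3 q \<Longrightarrow> kappa g a = kappa g b \<Longrightarrow> a = b"
  using kappa_intertwine[of g a] kappa_intertwine[of g b] SU3_inv(2)[of g]
  by (metis matrix_mul_assoc matrix_mul_lid)

lemma memC: "g \<in> SU3 q \<Longrightarrow> y ** g = g ** X \<Longrightarrow> y \<in> C"
  unfolding conj_class_def using intertwine_kappa[of g y X] by (auto simp: kappa_def)

lemma C_elim: "c \<in> C \<Longrightarrow> \<exists>g. g \<in> SU3 q \<and> c ** g = g ** X"
  unfolding conj_class_def using kappa_intertwine by (auto simp: kappa_def)

lemma C_SU3: "c \<in> C \<Longrightarrow> c \<in> SU3 q"
  unfolding conj_class_def using SU3_mult SU3_inv X_SU3 by auto

lemma conjC: assumes "c \<in> C" "g \<in> SU3 q" "z ** g = g ** c" shows "z \<in> C"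
proof -
  obtain h where h: "h \<in> SU3 q" "c ** h = h ** X" using C_elim[OF assms(1)] by blast
  have "z ** (g ** h) = (g ** h) ** X"
    by (metis assms(3) h(2) matrix_mul_assoc)
  then show ?thesis using memC SU3_mult assms(2) h(1) by blast
qed

lemma kappa_C: "c \<in> C \<Longrightarrow> g \<in> SU3 q \<Longrightarrow> kappa g c \<in> C"
  using conjC kappa_intertwine by blast

lemma adj_conj:
  assumes g: "g \<in> SU3 q" and ab: "killing_adj C a b"
  shows "killing_adj C (kappa g a) (kappa g b)"
proof -
  obtain d where d: "d \<in> C" "d ** (a ** b) = (a ** b) ** d" "a \<in> C" "b \<in> C" "a \<noteq> b"
    using ab unfolding killing_adj_def by blast
  have "kappa g d ** (kappa g a ** kappa g b) = (kappa g a ** kappa g b) ** kappa g d"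
    using d(2) kappa_mult[OF g] by metis
  moreover have "kappa g a \<noteq> kappa g b" using kappa_inj[OF g] d(5) by blast
  ultimately show ?thesis unfolding killing_adj_def using kappa_C[OF _ g] d by blast
qed

lemma rt_conj:
  assumes g: "g \<in> SU3 q" and ab: "(a, b) \<in> R\<^sup>*"
  shows "(kappa g a, kappa g b) \<in> R\<^sup>*"
  using ab
proof (induction rule: rtrancl_induct)
  case base then show ?case by simp
next
  case (step y z)
  then have "killing_adj C (kappa g y) (kappa g z)" using adj_conj[OF g] by simp
  then show ?case using step(3) by (simp add: rtrancl.rtrancl_into_rtrancl)
qed

lemma adj_sym:
  assumes ab: "killing_adj C a b"
  shows "killing_adj C b a"
proof -
  obtain d where d: "d \<in> C" "d ** (a ** b) = (a ** b) ** d" "a \<in> C" "b \<in> C" "a \<noteq> b"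
    using ab unfolding killing_adj_def by blast
  have aS: "a \<in> SU3 q" using C_SU3 d(3) .
  let ?ai = "matrix_inv a"
  define z where "z = ?ai ** d ** a"
  have i1: "a ** ?ai = mat 1" and i2: "?ai ** a = mat 1" using SU3_inv[OF aS] by auto
  have "z ** ?ai = ?ai ** d"
    unfolding z_def by (metis i1 matrix_mul_assoc matrix_mul_rid)
  then have zC: "z \<in> C" using conjC[OF d(1)] SU3_inv(3)[OF aS] by blast
  have "z ** (b ** a) = ?ai ** (d ** (a ** b)) ** a"
    unfolding z_def by (simp add: matrix_mul_assoc)
  also have "\<dots> = ?ai ** ((a ** b) ** d) ** a" using d(2) by simp
  also have "\<dots> = (?ai ** a) ** b ** d ** a" by (simp add: matrix_mul_assoc)
  also have "\<dots> = b ** d ** a" using i2 by simp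
  also have "\<dots> = (b ** a) ** z"
    unfolding z_def by (metis i1 matrix_mul_assoc matrix_mul_lid)
  finally show ?thesis unfolding killing_adj_def using zC d by blast
qed

lemma rt_sym: "(a, b) \<in> R\<^sup>* \<Longrightarrow> (b, a) \<in> R\<^sup>*"
proof (induction rule: rtrancl_induct)
  case base then show ?case by simp
next
  case (step y z)
  then have "(z, y) \<in> R" using adj_sym by simp
  then show ?case using step(3) by (meson converse_rtrancl_into_rtrancl)
qed

definition P :: "'a^3^3 \<Rightarrow> bool" where
  "P g \<longleftrightarrow> g \<in> SU3 q \<and> (X, kappa g X) \<in> R\<^sup>*"

lemma P_intro: "g \<in> SU3 q \<Longrightarrow> y ** g = g ** X \<Longrightarrow> (X, y) \<in> R\<^sup>* \<Longrightarrow> P g"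
  unfolding P_def using intertwine_kappa by blast

lemma P_mult:
  assumes "P g" "P h" shows "P (g ** h)"
proof -
  have g: "g \<in> SU3 q" and h: "h \<in> SU3 q" using assms P_def by auto
  have gh: "g ** h \<in> SU3 q" using SU3_mult g h by blast
  have "kappa g (kappa h X) ** (g ** h) = (g ** h) ** X"
    using kappa_intertwine[OF g] kappa_intertwine[OF h] by (metis matrix_mul_assoc)
  then have e: "kappa (g ** h) X = kappa g (kappa h X)" using intertwine_kappa[OF gh] by metis
  have "(kappa g X, kappa g (kappa h X)) \<in> R\<^sup>*" using rt_conj[OF g] assms(2) P_def by blast
  then have "(X, kappa g (kappa h X)) \<in> R\<^sup>*" using assms(1) P_def by (meson rtrancl_trans)
  then show ?thesis unfolding P_def using e gh by simp
qed

lemma all_P_irred: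
  assumes "\<And>g. g \<in> SU3 q \<Longrightarrow> P g"
  shows "killing_irreducible C"
  unfolding killing_irreducible_def
proof (intro ballI)
  have XC: "\<And>c. c \<in> C \<Longrightarrow> (X, c) \<in> R\<^sup>*"
  proof -
    fix c assume "c \<in> C"
    then obtain g where g: "g \<in> SU3 q" "c ** g = g ** X" using C_elim by blast
    then have "c = kappa g X" using intertwine_kappa by blast
    then show "(X, c) \<in> R\<^sup>*" using assms[OF g(1)] P_def by simp
  qed
  fix a b assume "a \<in> C" "b \<in> C"
  then show "(a, b) \<in> R\<^sup>*" using XC rt_sym by (meson rtrancl_trans)
qed

end

context su3 begin

lemma fq_nz: "(x::'a) \<noteq> 0 \<Longrightarrow> x ^ q \<noteq> 0" by simp

lemma claimA:
  assumes b0: "b \<noteq> 0" and yS: "upos b g \<in> SU3 q"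
  shows "upos b g \<in> C"
proof -
  have gq: "g ^ q = - g - b * b ^ q" using yS unfolding SU3_upos by (simp add: algebra_simps eq_neg_iff_add_eq_0)
  obtain a where a0: "a \<noteq> 0" and ab: "a * a = b * a ^ q" using tsurj[OF b0] by blast
  have aq0: "a ^ q \<noteq> 0" using a0 by simp
  have "(a * a) ^ q = (b * a ^ q) ^ q" using ab by simp
  then have bq: "b ^ q * a = a ^ q * a ^ q" by (simp add: power_mult_distrib finv mult.commute)
  define t where "t = mk a 0 0 0 (a ^ q / a) 0 0 0 (1 / a ^ q)"
  have tS: "t \<in> SU3 q"
    unfolding t_def SU3_def using a0 aq0
    by (simp add: star_mk J_mk det_mk finv power_divide)
  define g0 where "g0 = \<alpha> * a * a ^ q"
  have y0t: "upos b g0 ** t = t ** X"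
    unfolding t_def upos_def u_elt_mk g0_def using a0 aq0 ab bq
    by (simp add: field_simps)
  have bb: "b * b ^ q = a * a ^ q"
  proof -
    have "b * b ^ q * (a * a ^ q) = (b * a ^ q) * (b ^ q * a)" by (simp add: mult_ac)
    also have "\<dots> = (a * a) * (a ^ q * a ^ q)" using ab bq by simp
    finally have h: "(b * b ^ q) * (a * a ^ q) = (a * a ^ q) * (a * a ^ q)" by (simp add: mult_ac)
    moreover have "a * a ^ q \<noteq> 0" using a0 by simp
    ultimately show ?thesis by (metis mult_right_cancel)
  qed
  define d where "d = g - g0"
  have dq: "d ^ q = - d"
  proof -
    have "d ^ q = g ^ q - \<alpha> ^ q * a ^ q * a" unfolding d_def g0_def by (simp add: fsub power_mult_distrib finv)
    also have "\<dots> = - d" unfolding d_def g0_def gq bb arel by (simp add: algebra_simps)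
    finally show ?thesis .
  qed
  define n where "n = b * b ^ q"
  have n0: "n \<noteq> 0" unfolding n_def using b0 by simp
  have nq: "n ^ q = n" unfolding n_def by (simp add: power_mult_distrib finv mult.commute)
  define cc where "cc = \<alpha> * (d / n)"
  have ccq: "cc ^ q - cc = d / n"
    unfolding cc_def using n0 by (simp add: power_mult_distrib power_divide dq nq arel field_simps)
  define \<mu> where "\<mu> = cc * b"
  define \<nu> where "\<nu> = \<alpha> * \<mu> * \<mu> ^ q"
  have vS: "upos \<mu> \<nu> \<in> SU3 q"
    unfolding SU3_upos \<nu>_def by (simp add: power_mult_distrib finv arel algebra_simps)
  have key: "g - b * \<mu> ^ q = g0 - \<mu> * b ^ q"
  proof -
    have "b * \<mu> ^ q - \<mu> * b ^ q = n * (cc ^ q - cc)"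
      unfolding \<mu>_def n_def by (simp add: power_mult_distrib algebra_simps)
    also have "\<dots> = d" using ccq n0 by simp
    finally show ?thesis unfolding d_def by (simp add: algebra_simps)
  qed
  have yv: "upos b g ** upos \<mu> \<nu> = upos \<mu> \<nu> ** upos b g0"
    unfolding upos_def using key by (simp add: algebra_simps)
  have "upos b g ** (upos \<mu> \<nu> ** t) = (upos \<mu> \<nu> ** t) ** X"
    using yv y0t by (metis matrix_mul_assoc)
  then show ?thesis using memC SU3_mult[OF vS tS] by blast
qed

lemma upos_mult: "upos b1 c1 ** upos b2 c2 = upos (b1 + b2) (c1 + c2 - b1 * b2 ^ q)"
  unfolding upos_def by (simp add: fadd algebra_simps)

lemma U1_adj:
  assumes "b1 \<noteq> 0" "b2 \<noteq> 0" "upos b1 c1 \<in> SU3 q" "upos b2 c2 \<in> SU3 q" "upos b1 c1 \<noteq> upos b2 c2"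
  shows "killing_adj C (upos b1 c1) (upos b2 c2)"
proof -
  have m1: "upos b1 c1 \<in> C" "upos b2 c2 \<in> C" using claimA assms by auto
  have pS: "upos b1 c1 ** upos b2 c2 \<in> SU3 q" using SU3_mult assms by blast
  show ?thesis
  proof (cases "b1 + b2 = 0")
    case False
    then have "upos b1 c1 ** upos b2 c2 \<in> C" using pS claimA unfolding upos_mult by simp
    then show ?thesis unfolding killing_adj_def using m1 assms(5) by blast
  next
    case True
    then have "b2 = - b1" by (metis add.commute eq_neg_iff_add_eq_0)
    then have "upos b1 c1 ** upos b2 c2 = mk 1 0 (c1 + c2 - b1 * b2 ^ q) 0 1 0 0 0 1"
      unfolding upos_mult upos_def by simp
    then have "X ** (upos b1 c1 ** upos b2 c2) = (upos b1 c1 ** upos b2 c2) ** X"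
      by (simp add: u_elt_mk algebra_simps)
    moreover have "X \<in> C" using memC[of "mat 1"] by (simp add: SU3_def star_one J_sq)
    ultimately show ?thesis unfolding killing_adj_def using m1 assms(5) by blast
  qed
qed

lemma U1_path:
  assumes "b \<noteq> 0" "upos b c \<in> SU3 q"
  shows "(X, upos b c) \<in> R\<^sup>*"
proof (cases "upos b c = X")
  case True then show ?thesis by simp
next
  case False
  then have "killing_adj C X (upos b c)"
    unfolding X_upos using U1_adj[of 1 b \<alpha> c] assms X_SU3 X_upos by simp
  then show ?thesis by auto
qed

end

context su3 begin

lemma unitri_SU3:
  assumes "mk 1 b c 0 1 e 0 0 1 \<in> SU3 q"
  shows "mk 1 b c 0 1 e 0 0 1 = upos b c"
proof -
  have "e + b ^ q = 0" using assms by (simp add: SU3_def star_mk J_mk)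
  then show ?thesis unfolding upos_def by (simp add: eq_neg_iff_add_eq_0)
qed

lemma P_upper:
  assumes gS: "g \<in> SU3 q" and g31: "g $ 3 $ 1 = 0"
  shows "P g"
proof -
  obtain a b c d e f h i where G: "g = mk a b c d e f 0 h i"
    using that[of "g$1$1" "g$1$2" "g$1$3" "g$2$1" "g$2$2" "g$2$3" "g$3$2" "g$3$3"]
      mat_eq_mk[of g] g31 by simp
  have c11: "d ^ q * d = 0" and c12: "d ^ q * e + a ^ q * h = 0" and dt: "a*e*i + c*d*h - a*f*h - b*d*i = 1"
    using gS unfolding G by (simp_all add: SU3_def star_mk J_mk det_mk)
  have d0: "d = 0" using c11 by auto
  have "a * (e * i - f * h) = 1" using dt d0 by (simp add: algebra_simps)
  then have a0: "a \<noteq> 0" by auto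
  have h0: "h = 0" using c12 d0 a0 by simp
  have aei: "a * e * i = 1" using dt d0 h0 by simp
  then have e0: "e \<noteq> 0" and i0: "i \<noteq> 0" by auto
  define y where "y = kappa g X"
  have yS: "y \<in> SU3 q" unfolding y_def kappa_def by (rule SU3_mult[OF SU3_mult[OF gS X_SU3] SU3_inv(3)[OF gS]])
  have yg: "y ** g = g ** X" unfolding y_def using kappa_intertwine gS by blast
  obtain y1 y2 y3 y4 y5 y6 y7 y8 y9 where Y: "y = mk y1 y2 y3 y4 y5 y6 y7 y8 y9"
    using that[of "y$1$1" "y$1$2" "y$1$3" "y$2$1" "y$2$2" "y$2$3" "y$3$1" "y$3$2" "y$3$3"]
      mat_eq_mk[of y] by simp
  have E: "y1 * a = a" "y4 * a = 0" "y7 * a = 0"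
      "y1 * b + y2 * e = a + b" "y4 * b + y5 * e = e" "y7 * b + y8 * e = 0"
      "y7 * c + y8 * f + y9 * i = i"
    using yg unfolding Y G u_elt_mk d0 h0 by (simp_all add: algebra_simps)
  have y1: "y1 = 1" using E(1) a0 by simp
  have y4: "y4 = 0" and y7: "y7 = 0" using E(2,3) a0 by auto
  have y8: "y8 = 0" using E(6) y7 e0 by simp
  have y5: "y5 = 1" using E(5) y4 e0 by simp
  have y9: "y9 = 1" using E(7) y7 y8 i0 by simp
  have y2: "y2 \<noteq> 0" using E(4) y1 a0 by auto
  have "y = mk 1 y2 y3 0 1 y6 0 0 1" unfolding Y y1 y4 y5 y7 y8 y9 ..
  then have yu: "y = upos y2 y3" using unitri_SU3 yS by metis
  then have "(X, y) \<in> R\<^sup>*" using U1_path y2 yS by simp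
  then show ?thesis using P_intro gS yg by blast
qed

end

context su3 begin

lemma s0: "1 + \<alpha> \<noteq> 0"
proof
  assume "1 + \<alpha> = 0"
  then have "\<alpha> = - 1" by (metis add.commute eq_neg_iff_add_eq_0)
  then have "\<alpha> ^ q = 0" using arel by simp
  then show False using a0 by simp
qed

lemma s0': "\<alpha> + 1 \<noteq> 0" "- 1 - \<alpha> \<noteq> 0" "\<alpha> ^ q \<noteq> 0"
  using s0 a0 by (auto simp: algebra_simps)

lemma aq1: "(1 + \<alpha>) ^ q = - \<alpha>" "(\<alpha> + 1) ^ q = - \<alpha>"
  using fadd[of 1 \<alpha>] fadd[of \<alpha> 1] arel by (simp_all add: algebra_simps)

lemma one_q [simp]: "(1::'a) ^ q = 1" by simp

lemma upos_inv:
  "upos b c ** upos (- b) (- c - b * b ^ q) = mat 1"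
  "upos (- b) (- c - b * b ^ q) ** upos b c = mat 1"
  by (simp_all add: upos_mult mat1_mk upos_def)

lemma det_upos: "det (upos b c) = 1" by (simp add: upos_def det_mk)

lemma upos_inv_SU3:
  assumes "upos b c \<in> SU3 q" shows "upos (- b) (- c - b * b ^ q) \<in> SU3 q"
proof -
  have "matrix_inv (upos b c) = upos (- b) (- c - b * b ^ q)"
    using inv_unique det_upos upos_inv(1) by (metis one_neq_zero)
  then show ?thesis using SU3_inv(3)[OF assms] by simp
qed

definition "sa = 1 + \<alpha>"
lemma sa0: "sa \<noteq> 0" using s0 by (simp add: sa_def)
lemma saq: "sa ^ q = - \<alpha>" using aq1 by (simp add: sa_def)
lemma aqs: "\<alpha> ^ q = - sa" using arel by (simp add: sa_def)

definition "Wm = (mk 0 0 (-1) 0 (-1) 0 (-1) 0 0 :: 'a^3^3)"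
definition "em = mk 1 0 0 (-1) 1 0 \<alpha> 1 1"
definition "vm = upos (- 1 / (\<alpha> * sa)) (- 1 / (\<alpha> * \<alpha> * sa))"
definition "u2m = upos (- 1 / (\<alpha> * \<alpha>)) (- 1 / (\<alpha> * \<alpha> * sa))"
definition "epm = mk 1 0 0 (- \<alpha> / sa) 1 0 \<alpha> (sa / \<alpha>) 1"
definition "ypm = upos (sa / \<alpha>) \<alpha>"

lemma W_SU3: "Wm \<in> SU3 q"
  by (simp add: Wm_def SU3_def star_mk J_mk det_mk)

lemma eW: "em ** Wm = Wm ** X"
  by (simp add: em_def Wm_def u_elt_mk)

lemma vS: "vm \<in> SU3 q"
  unfolding vm_def SU3_upos using a0 sa0
  apply (simp only: power_divide power_mult_distrib fneg saq aqs one_q mk_mult mk_eq_iff)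
  apply (simp add: field_simps)
  apply (simp add: sa_def algebra_simps)
  done

lemma u2S: "u2m \<in> SU3 q"
  unfolding u2m_def SU3_upos using a0 sa0
  apply (simp only: power_divide power_mult_distrib fneg saq aqs one_q mk_mult mk_eq_iff)
  apply (simp add: field_simps)
  apply (simp add: sa_def algebra_simps)
  done

lemma ypS: "ypm \<in> SU3 q"
  unfolding ypm_def SU3_upos using a0 sa0
  apply (simp only: power_divide power_mult_distrib fneg saq aqs one_q mk_mult mk_eq_iff)
  apply (simp add: field_simps)
  apply (simp add: sa_def algebra_simps)
  done

lemma epW: "epm ** Wm = Wm ** ypm"
  unfolding epm_def Wm_def ypm_def upos_def using a0 sa0
  apply (simp only: power_divide power_mult_distrib fneg saq aqs one_q mk_mult mk_eq_iff)
  apply (simp add: field_simps)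
  done

lemma ve: "vm ** em = epm ** u2m"
  unfolding vm_def em_def epm_def u2m_def upos_def using a0 sa0
  apply (simp only: power_divide power_mult_distrib fneg saq aqs one_q mk_mult mk_eq_iff)
  apply (simp add: field_simps)
  apply (simp add: sa_def algebra_simps)
  done

end

context su3 begin

lemma P_W: "P Wm"
proof -
  define b where "b = - 1 / (\<alpha> * \<alpha>)"
  define c where "c = - 1 / (\<alpha> * \<alpha> * sa)"
  define bv where "bv = - 1 / (\<alpha> * sa)"
  define cv where "cv = - 1 / (\<alpha> * \<alpha> * sa)"
  define u2i where "u2i = upos (- b) (- c - b * b ^ q)"
  have u2: "u2m = upos b c" unfolding u2m_def b_def c_def ..
  have v: "vm = upos bv cv" unfolding vm_def bv_def cv_def ..
  have u2iS: "u2i \<in> SU3 q" unfolding u2i_def using upos_inv_SU3 u2S u2 by simp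
  have u2u2i: "u2m ** u2i = mat 1" unfolding u2 u2i_def by (rule upos_inv(1))
  define u where "u = u2i ** vm"
  have uS: "u \<in> SU3 q" unfolding u_def using SU3_mult u2iS vS by blast
  have bu: "- b + bv = 1 / (\<alpha> * \<alpha> * sa)"
    unfolding b_def bv_def using a0 sa0 by (simp add: field_simps) (simp add: sa_def algebra_simps)
  have bu0: "- b + bv \<noteq> 0" unfolding bu using a0 sa0 by simp
  have uu: "u = upos (- b + bv) (- c - b * b ^ q + cv - (- b) * bv ^ q)"
    unfolding u_def u2i_def v upos_mult ..
  have uC: "u \<in> C" using claimA bu0 uS uu by simp
  have Xu: "(X, u) \<in> R\<^sup>*" using U1_path bu0 uS uu by simp
  have eC: "em \<in> C" using memC W_SU3 eW by blast
  have ypC: "ypm \<in> C"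
  proof -
    have "sa / \<alpha> \<noteq> 0" using a0 sa0 by simp
    then show ?thesis using claimA ypS unfolding ypm_def by blast
  qed
  have epC: "epm \<in> C" using conjC[OF ypC W_SU3 epW] .
  have "(u ** em) ** u2i = u2i ** (vm ** em) ** u2i" unfolding u_def by (simp add: matrix_mul_assoc)
  also have "\<dots> = u2i ** epm ** (u2m ** u2i)" unfolding ve by (simp add: matrix_mul_assoc)
  also have "\<dots> = u2i ** epm" unfolding u2u2i by simp
  finally have dC: "u ** em \<in> C" using conjC[OF epC u2iS] by blast
  have "u $ 2 $ 1 \<noteq> em $ 2 $ 1" unfolding uu upos_def em_def by simp
  then have "u \<noteq> em" by auto
  then have "killing_adj C u em" unfolding killing_adj_def using uC eC dC by blast
  then have "(X, em) \<in> R\<^sup>*" using Xu by (simp add: rtrancl.rtrancl_into_rtrancl)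
  then show ?thesis using P_intro W_SU3 eW by blast
qed

lemma P_all:
  assumes gS: "g \<in> SU3 q" shows "P g"
proof (cases "g $ 3 $ 1 = 0")
  case True then show ?thesis using P_upper gS by blast
next
  case False
  define a1 where "a1 = g $ 1 $ 1"
  define a2 where "a2 = g $ 2 $ 1"
  define a3 where "a3 = g $ 3 $ 1"
  have a30: "a3 \<noteq> 0" using False a3_def by simp
  have a3q: "a3 ^ q \<noteq> 0" using a30 by simp
  have iso: "a1 ^ q * a3 + a2 ^ q * a2 + a3 ^ q * a1 = 0"
  proof -
    have "(star_q q g ** antidiag_J ** g) $ 1 $ 1 = antidiag_J $ 1 $ 1" using gS by (simp add: SU3_def)
    then show ?thesis
      unfolding a1_def a2_def a3_def
      by (simp add: star_q_def J_mk matrix_matrix_mult_def sum_3 transpose_def) (simp add: add_ac)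
  qed
  define \<beta> where "\<beta> = (a2 / a3) ^ q"
  define \<gamma> where "\<gamma> = - (a1 + \<beta> * a2) / a3"
  have \<beta>q: "\<beta> ^ q = a2 / a3" unfolding \<beta>_def by (rule finv)
  have uS: "upos \<beta> \<gamma> \<in> SU3 q"
    unfolding SU3_upos
  proof -
    have nq: "(- (a1 + \<beta> * a2)) ^ q = - (a1 ^ q + a2 / a3 * a2 ^ q)"
      by (simp only: fneg fadd power_mult_distrib \<beta>q)
    have gq: "\<gamma> ^ q = - (a1 ^ q + a2 / a3 * a2 ^ q) / a3 ^ q"
      unfolding \<gamma>_def power_divide nq ..
    have "\<gamma> + \<gamma> ^ q + \<beta> * \<beta> ^ q =
      - (a1 + \<beta> * a2) / a3 - (a1 ^ q + a2 / a3 * a2 ^ q) / a3 ^ q + \<beta> * (a2 / a3)"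
      unfolding gq \<beta>q by (simp add: \<gamma>_def diff_divide_distrib add_divide_distrib)
    also have "\<dots> = - (a1 ^ q * a3 + a2 ^ q * a2 + a3 ^ q * a1) / (a3 * a3 ^ q)"
      using a30 a3q by (simp add: field_simps)
    also have "\<dots> = 0" using iso by simp
    finally show "\<gamma> + \<gamma> ^ q + \<beta> * \<beta> ^ q = 0" .
  qed
  define b' where "b' = Wm ** (upos \<beta> \<gamma> ** g)"
  have b'S: "b' \<in> SU3 q" unfolding b'_def using SU3_mult W_SU3 uS gS by blast
  have "b' $ 3 $ 1 = - (a1 + \<beta> * a2 + \<gamma> * a3)"
    unfolding b'_def a1_def a2_def a3_def Wm_def upos_def
    by (simp add: matrix_matrix_mult_def sum_3)
  also have "\<dots> = 0" unfolding \<gamma>_def using a30 by (simp add: field_simps)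
  finally have Pb: "P b'" using P_upper b'S by blast
  define ui where "ui = upos (- \<beta>) (- \<gamma> - \<beta> * \<beta> ^ q)"
  have Pui: "P ui" unfolding ui_def
    using P_upper upos_inv_SU3[OF uS] by (simp add: upos_def)
  have WW: "Wm ** Wm = mat 1" by (simp add: Wm_def mat1_mk)
  have "ui ** (Wm ** b') = ui ** (Wm ** Wm) ** upos \<beta> \<gamma> ** g"
    unfolding b'_def by (simp add: matrix_mul_assoc)
  also have "\<dots> = (ui ** upos \<beta> \<gamma>) ** g" unfolding WW by (simp add: matrix_mul_assoc)
  also have "\<dots> = g" unfolding ui_def upos_inv(2) by simp
  finally have "g = ui ** (Wm ** b')" by simp
  then show ?thesis using P_mult Pui P_W Pb by metis
qed

theorem irred: "killing_irreducible C"
  using all_P_irred P_all by blast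

end

theorem corollary4p11:
  fixes q :: nat and \<alpha> :: "'a::{field, finite}"
  assumes "prime_power q"
    and "CARD('a) = q ^ 2"
    and "q mod 3 \<noteq> 2"
    and "\<alpha> \<noteq> 0"
    and "\<alpha> + \<alpha> ^ q + 1 = 0"
  shows "killing_irreducible (conj_class q (u_elt \<alpha>) :: ('a ^ 3 ^ 3) set)"
proof -
  have qpos: "q > 0" using assms(1) unfolding prime_power_def
    by (metis prime_gt_0_nat zero_less_power)
  interpret su3 q \<alpha>
  proof
    show "\<And>x y::'a. (x + y) ^ q = x ^ q + y ^ q" using frob_add assms(1,2) by blast
    show "\<And>x::'a. (x ^ q) ^ q = x"
    proof -
      fix x :: 'a
      have "(x ^ q) ^ q = x ^ CARD('a)" using assms(2) by (simp add: power_mult[symmetric] power2_eq_square)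
      then show "(x ^ q) ^ q = x" using fin_power_card_same by simp
    qed
    show "q > 0" by (rule qpos)
    show "\<alpha> \<noteq> 0" by (rule assms(4))
    show "\<alpha> ^ q = - 1 - \<alpha>" using assms(5) by (simp add: algebra_simps eq_neg_iff_add_eq_0)
    show "\<And>b::'a. b \<noteq> 0 \<Longrightarrow> \<exists>a. a \<noteq> 0 \<and> a * a = b * a ^ q"
      using torus_surj assms(2,3) by blast
  qed
  show ?thesis by (rule irred)
qed

end
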